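(* Let $(\mathcal V,\mathcal W,\lambda)$ be a FTvN system where $\mathcal V$ is a Hilbert space, and let $C$ denote its center. Then: (a) $\mathcal V=C+C^\perp$. (b) $(C,\mathcal W,\lambda|_C)$ is a FTvN system whose center is $C$ (so any two elements in this system commute). (c) $(C^\perp,\mathcal W,\lambda|_{C^\perp})$ is a FTvN system whose center is $\{0\}$.
   Context: A Fan-Theobald-von Neumann (FTvN) system is a triple $(\mathcal V,\mathcal W,\lambda)$ where $\mathcal V,\mathcal W$ are real inner product spaces and $\lambda:\mathcal V\to\mathcal W$ is a map such that: (A1) $\|\lambda(x)\|=\|x\|$ for all $x$; (A2) $\langle x,y\rangle\le\langle\lambda(x),\lambda(y)\rangle$ for all $x,y$; (A3) for every $c\in\mathcal V$ and $q\in\lambda(\mathcal V)$ there exists $x$ with $\lambda(x)=q$ and $\langle c,x\rangle=\langle\lambda(c),\lambda(x)\rangle$. Elements $x,y$ commute if $\langle x,y\rangle=\langle\lambda(x),\lambda(y)\rangle$; the center of a FTvN system is the set of elements commuting with every element of the underlying space. Subspaces carry the restricted inner product. *)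

theory Defs
  imports "HOL-Analysis.Analysis"
begin

text \<open>A FTvN system (S, W, lam restricted to S), where S is a linear subspace of the
  real inner product space 'v carrying the restricted inner product, and W is the type 'w.\<close>
definition ftvn :: "'v::real_inner set \<Rightarrow> ('v \<Rightarrow> 'w::real_inner) \<Rightarrow> bool" where
  "ftvn S lam \<longleftrightarrow> subspace S
     \<and> (\<forall>x\<in>S. norm (lam x) = norm x)
     \<and> (\<forall>x\<in>S. \<forall>y\<in>S. x \<bullet> y \<le> lam x \<bullet> lam y)
     \<and> (\<forall>c\<in>S. \<forall>q\<in>lam ` S. \<exists>x\<in>S. lam x = q \<and> c \<bullet> x = lam c \<bullet> lam x)"

definition ftvn_commute :: "('v::real_inner \<Rightarrow> 'w::real_inner) \<Rightarrow> 'v \<Rightarrow> 'v \<Rightarrow> bool" where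
  "ftvn_commute lam x y \<longleftrightarrow> x \<bullet> y = lam x \<bullet> lam y"

definition ftvn_center :: "'v::real_inner set \<Rightarrow> ('v \<Rightarrow> 'w::real_inner) \<Rightarrow> 'v set" where
  "ftvn_center S lam = {x\<in>S. \<forall>y\<in>S. ftvn_commute lam x y}"

end

theory Submission
  imports Defs "HOL-Analysis.Analysis"
begin


lemma proj_exists:
  fixes S :: "'a::{real_inner,complete_space} set"
  assumes sub: "subspace S" and cl: "closed S"
  shows "\<exists>s\<in>S. \<forall>y\<in>S. (x - s) \<bullet> y = 0"
proof -
  define D where "D = {(norm (x - s))^2 | s. s \<in> S}"
  define d where "d = Inf D"
  have "0 \<in> S" using sub by (simp add: subspace_0)
  hence Dne: "D \<noteq> {}" unfolding D_def by blast
  have Dbdd: "bdd_below D" unfolding D_def by (rule bdd_belowI[of _ 0]) auto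
  have ge: "d \<le> (norm (x - s))^2" if "s \<in> S" for s
    unfolding d_def using that Dbdd by (intro cInf_lower) (auto simp: D_def)
  have "\<exists>s\<in>S. (norm (x - s))^2 < d + inverse (real (Suc n))" for n
  proof (rule ccontr)
    assume "\<not> ?thesis"
    hence "\<forall>z\<in>D. d + inverse (real (Suc n)) \<le> z" unfolding D_def by force
    hence "d + inverse (real (Suc n)) \<le> d" unfolding d_def using Dne by (intro cInf_greatest) auto
    moreover have "inverse (real (Suc n)) > 0" by simp
    ultimately show False by linarith
  qed
  then obtain f where fS: "\<And>n. f n \<in> S" and fd: "\<And>n. (norm (x - f n))^2 < d + inverse (real (Suc n))"
    by metis
  have par: "(norm (f m - f n))^2 \<le> 2 * inverse (real (Suc m)) + 2 * inverse (real (Suc n))" for m n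
  proof -
    define a where "a = x - f m"
    define b where "b = x - f n"
    have e1: "f m - f n = b - a" by (simp add: a_def b_def)
    have e2: "x - (1/2) *\<^sub>R (f m + f n) = (1/2) *\<^sub>R (a + b)"
      by (simp add: a_def b_def algebra_simps flip: scaleR_add_left)
    have mid: "(1/2) *\<^sub>R (f m + f n) \<in> S" using sub fS by (simp add: subspace_add subspace_scale)
    have "d \<le> (norm ((1/2) *\<^sub>R (a + b)))^2" using ge[OF mid] e2 by simp
    hence h1: "4 * d \<le> (a+b) \<bullet> (a+b)" by (simp add: power_divide flip: power2_norm_eq_inner)
    have "(norm (f m - f n))^2 = (b - a) \<bullet> (b - a)" by (simp add: e1 power2_norm_eq_inner)
    also have "\<dots> = 2 * (a \<bullet> a) + 2 * (b \<bullet> b) - (a+b) \<bullet> (a+b)"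
      by (simp add: inner_diff_left inner_diff_right inner_add_left inner_add_right inner_commute)
    finally show ?thesis using h1 fd[of m] fd[of n] unfolding a_def b_def power2_norm_eq_inner by linarith
  qed
  have "Cauchy f"
  proof (rule metric_CauchyI)
    fix e :: real assume e: "e > 0"
    obtain M :: nat where M: "4 / e^2 < real M" using reals_Archimedean2 by blast
    show "\<exists>M. \<forall>m\<ge>M. \<forall>n\<ge>M. dist (f m) (f n) < e"
    proof (intro exI allI impI)
      fix m n assume mn: "M \<le> m" "M \<le> n"
      have "e^2 > 0" using e by simp
      have Mpos: "real M > 0" using M \<open>e^2 > 0\<close>
        by (metis divide_pos_pos order.strict_trans zero_less_numeral)
      have im: "inverse (real (Suc m)) \<le> inverse (real M)" using mn Mpos
        by (intro le_imp_inverse_le) auto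
      have iN: "inverse (real (Suc n)) \<le> inverse (real M)" using mn Mpos
        by (intro le_imp_inverse_le) auto
      have "4 * inverse (real M) < e^2" using M Mpos \<open>e^2 > 0\<close>
        by (simp add: field_simps)
      hence "(norm (f m - f n))^2 < e^2" using par[of m n] im iN by linarith
      hence "norm (f m - f n) < e" using power_less_imp_less_base[of "norm (f m - f n)" 2 e] e by linarith
      thus "dist (f m) (f n) < e" by (simp add: dist_norm)
    qed
  qed
  then obtain s where lim: "f \<longlonglongrightarrow> s" using Cauchy_convergent_iff convergent_def by blast
  have sS: "s \<in> S" using closed_sequentially[OF cl fS lim] .
  have "(\<lambda>n. (norm (x - f n))^2) \<longlonglongrightarrow> (norm (x - s))^2"
    by (intro tendsto_intros lim)
  moreover have "(\<lambda>n. d + inverse (real (Suc n))) \<longlonglongrightarrow> d + 0"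
    by (intro tendsto_add tendsto_const LIMSEQ_inverse_real_of_nat)
  moreover have "\<exists>N. \<forall>n\<ge>N. (norm (x - f n))^2 \<le> d + inverse (real (Suc n))"
    using fd less_imp_le by blast
  ultimately have sd0: "(norm (x - s))^2 \<le> d + 0"
    by (rule LIMSEQ_le)
  hence sd: "(norm (x - s))^2 \<le> d" by simp
  show ?thesis
  proof (intro bexI[OF _ sS] ballI)
    fix y assume yS: "y \<in> S"
    define u where "u = x - s"
    define a where "a = u \<bullet> y"
    have key: "0 \<le> t^2 * (y \<bullet> y) - 2 * t * a" for t
    proof -
      have "s + t *\<^sub>R y \<in> S" using sub sS yS by (simp add: subspace_add subspace_scale)
      hence "(norm u)^2 \<le> (norm (x - (s + t *\<^sub>R y)))^2"
        using ge sd unfolding u_def by (meson order_trans)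
      hence "u \<bullet> u \<le> (u - t *\<^sub>R y) \<bullet> (u - t *\<^sub>R y)"
        unfolding u_def power2_norm_eq_inner by (simp add: algebra_simps)
      also have "\<dots> = u \<bullet> u - 2 * t * a + t^2 * (y \<bullet> y)"
        by (simp add: a_def inner_diff_left inner_diff_right inner_commute power2_eq_square algebra_simps)
      finally show ?thesis by linarith
    qed
    show "(x - s) \<bullet> y = 0"
    proof (cases "y = 0")
      case True thus ?thesis by simp
    next
      case False
      hence yy: "y \<bullet> y > 0" by simp
      have "0 \<le> (a / (y \<bullet> y))^2 * (y \<bullet> y) - 2 * (a / (y \<bullet> y)) * a" by (rule key)
      also have "\<dots> = - (a^2 / (y \<bullet> y))" using yy by (simp add: field_simps power2_eq_square)
      finally have "a^2 / (y \<bullet> y) \<le> 0" by linarith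
      hence "a^2 \<le> 0" using yy by (simp add: divide_le_0_iff)
      hence "a = 0" by simp
      thus ?thesis by (simp add: a_def u_def)
    qed
  qed
qed


lemma inner_sq_eq: "norm a = norm b \<Longrightarrow> a \<bullet> a = b \<bullet> b"
  by (metis power2_norm_eq_inner)

lemma lam0:
  assumes "ftvn UNIV lam" shows "lam 0 = 0"
  using assms unfolding ftvn_def by (metis UNIV_I norm_eq_zero)

lemma central_iff:
  "c \<in> ftvn_center UNIV lam \<longleftrightarrow> (\<forall>y. c \<bullet> y = lam c \<bullet> lam y)"
  by (simp add: ftvn_center_def ftvn_commute_def)

lemma lam_lip:
  fixes lam :: "'v::real_inner \<Rightarrow> 'w::real_inner"
  assumes A: "ftvn UNIV lam" shows "norm (lam x - lam y) \<le> norm (x - y)"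
proof -
  have n1: "lam x \<bullet> lam x = x \<bullet> x" "lam y \<bullet> lam y = y \<bullet> y"
    using A unfolding ftvn_def by (auto intro: inner_sq_eq)
  have i: "x \<bullet> y \<le> lam x \<bullet> lam y" using A unfolding ftvn_def by auto
  have "(norm (lam x - lam y))^2 = lam x \<bullet> lam x + lam y \<bullet> lam y - 2 * (lam x \<bullet> lam y)"
    by (simp add: power2_norm_eq_inner inner_diff_left inner_diff_right inner_commute)
  also have "\<dots> \<le> x \<bullet> x + y \<bullet> y - 2 * (x \<bullet> y)" using n1 i by linarith
  also have "\<dots> = (norm (x - y))^2"
    by (simp add: power2_norm_eq_inner inner_diff_left inner_diff_right inner_commute)
  finally show ?thesis by (rule power2_le_imp_le) simp
qed

lemma central_add_lam:
  fixes lam :: "'v::real_inner \<Rightarrow> 'w::real_inner"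
  assumes A: "ftvn UNIV lam" and c: "c \<in> ftvn_center UNIV lam"
  shows "lam (x + c) = lam x + lam c"
proof -
  define a where "a = lam (x + c)"
  define b where "b = lam x"
  define e where "e = lam c"
  have "norm a = norm (x+c)" "norm b = norm x" "norm e = norm c"
    using A unfolding ftvn_def a_def b_def e_def by blast+
  hence aa: "a \<bullet> a = (x+c) \<bullet> (x+c)" and bb: "b \<bullet> b = x \<bullet> x" and ee: "e \<bullet> e = c \<bullet> c"
    by (metis inner_sq_eq)+
  have ab: "(x + c) \<bullet> x \<le> a \<bullet> b" using A unfolding ftvn_def a_def b_def by auto
  have ae: "a \<bullet> e = (x + c) \<bullet> c" using c unfolding central_iff a_def e_def by (metis inner_commute)
  have be: "b \<bullet> e = x \<bullet> c" using c unfolding central_iff b_def e_def by (metis inner_commute)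
  have "(norm (a - b - e))^2 = a \<bullet> a + b \<bullet> b + e \<bullet> e - 2 * (a \<bullet> b) - 2 * (a \<bullet> e) + 2 * (b \<bullet> e)"
    by (simp add: power2_norm_eq_inner inner_diff_left inner_diff_right inner_commute)
  also have "\<dots> \<le> (x+c) \<bullet> (x+c) + x \<bullet> x + c \<bullet> c - 2 * ((x + c) \<bullet> x) - 2 * ((x + c) \<bullet> c) + 2 * (x \<bullet> c)"
    using aa bb ee ab ae be by linarith
  also have "\<dots> = 0" by (simp add: inner_add_left inner_add_right inner_commute)
  finally have "norm (a - b - e) = 0" by simp
  thus ?thesis unfolding a_def b_def e_def by (simp add: algebra_simps)
qed

lemma central_scale_lam:
  fixes lam :: "'v::real_inner \<Rightarrow> 'w::real_inner"
  assumes A: "ftvn UNIV lam" and c: "c \<in> ftvn_center UNIV lam"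
  shows "lam (t *\<^sub>R c) = t *\<^sub>R lam c"
proof -
  define a where "a = lam (t *\<^sub>R c)"
  define e where "e = lam c"
  have "norm a = norm (t *\<^sub>R c)" "norm e = norm c"
    using A unfolding ftvn_def a_def e_def by blast+
  hence aa: "a \<bullet> a = (t *\<^sub>R c) \<bullet> (t *\<^sub>R c)" and ee: "e \<bullet> e = c \<bullet> c"
    by (metis inner_sq_eq)+
  have ae: "a \<bullet> e = c \<bullet> (t *\<^sub>R c)" using c unfolding central_iff a_def e_def by (metis inner_commute)
  have "(norm (a - t *\<^sub>R e))^2 = a \<bullet> a - 2 * t * (a \<bullet> e) + t * t * (e \<bullet> e)"
    by (simp add: power2_norm_eq_inner inner_diff_left inner_diff_right inner_commute algebra_simps)
  also have "\<dots> = 0" using aa ae ee by (simp add: algebra_simps)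
  finally have "norm (a - t *\<^sub>R e) = 0" by simp
  thus ?thesis unfolding a_def e_def by simp
qed

lemma center_subspace:
  fixes lam :: "'v::real_inner \<Rightarrow> 'w::real_inner"
  assumes A: "ftvn UNIV lam"
  shows "subspace (ftvn_center UNIV lam)"
  unfolding subspace_def
proof (intro conjI ballI allI)
  show "0 \<in> ftvn_center UNIV lam" using lam0[OF A] by (simp add: central_iff)
next
  fix x y assume x: "x \<in> ftvn_center UNIV lam" and y: "y \<in> ftvn_center UNIV lam"
  show "x + y \<in> ftvn_center UNIV lam"
    using x y central_add_lam[OF A y, of x] unfolding central_iff
    by (simp add: inner_add_left)
next
  fix t :: real and x assume x: "x \<in> ftvn_center UNIV lam"
  show "t *\<^sub>R x \<in> ftvn_center UNIV lam"
    using x central_scale_lam[OF A x, of t] unfolding central_iff by simp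
qed

lemma center_closed:
  fixes lam :: "'v::real_inner \<Rightarrow> 'w::real_inner"
  assumes A: "ftvn UNIV lam"
  shows "closed (ftvn_center UNIV lam)"
proof -
  have "1-lipschitz_on UNIV lam"
    by (rule lipschitz_onI) (use lam_lip[OF A] in \<open>auto simp: dist_norm\<close>)
  hence cl: "continuous_on UNIV lam" by (rule lipschitz_on_continuous_on)
  have eq: "ftvn_center UNIV lam = (\<Inter>y. {x. x \<bullet> y = lam x \<bullet> lam y})"
    by (auto simp: central_iff)
  show ?thesis unfolding eq
    by (intro closed_INT ballI closed_Collect_eq continuous_intros cl)
qed

theorem theorem6p6:
  fixes lam :: "'v::{real_inner,complete_space} \<Rightarrow> 'w::real_inner"
  assumes "ftvn UNIV lam"
  shows "UNIV = {c + d | c d. c \<in> ftvn_center UNIV lam \<and> d \<in> orthogonal_comp (ftvn_center UNIV lam)}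
         \<and> ftvn (ftvn_center UNIV lam) lam \<and> ftvn_center (ftvn_center UNIV lam) lam = ftvn_center UNIV lam
         \<and> ftvn (orthogonal_comp (ftvn_center UNIV lam)) lam
         \<and> ftvn_center (orthogonal_comp (ftvn_center UNIV lam)) lam = {0}"
proof -
  note A = assms
  define C where "C = ftvn_center UNIV lam"
  have subC: "subspace C" unfolding C_def by (rule center_subspace[OF A])
  have clC: "closed C" unfolding C_def by (rule center_closed[OF A])
  have cen: "\<And>c y. c \<in> C \<Longrightarrow> c \<bullet> y = lam c \<bullet> lam y" unfolding C_def central_iff by blast
  have A1: "\<And>x. norm (lam x) = norm x" and A2: "\<And>x y. x \<bullet> y \<le> lam x \<bullet> lam y"
    and A3: "\<And>c q. q \<in> range lam \<Longrightarrow> \<exists>x. lam x = q \<and> c \<bullet> x = lam c \<bullet> lam x"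
    using A unfolding ftvn_def by auto
  have orth: "\<And>d. d \<in> orthogonal_comp C \<longleftrightarrow> (\<forall>c\<in>C. c \<bullet> d = 0)"
    by (simp add: orthogonal_comp_def orthogonal_def)
  have dec: "\<exists>c d. x = c + d \<and> c \<in> C \<and> d \<in> orthogonal_comp C" for x
  proof -
    obtain s where s: "s \<in> C" "\<forall>y\<in>C. (x - s) \<bullet> y = 0" using proj_exists[OF subC clC] by blast
    show ?thesis
      by (rule exI[of _ s], rule exI[of _ "x - s"]) (use s in \<open>auto simp: orth inner_commute\<close>)
  qed
  have P1: "UNIV = {c + d | c d. c \<in> C \<and> d \<in> orthogonal_comp C}"
    using dec by blast
  have P2: "ftvn C lam"
    unfolding ftvn_def
  proof (intro conjI ballI)
    show "subspace C" by (rule subC)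
  next
    fix c q assume c: "c \<in> C" and q: "q \<in> lam ` C"
    then obtain x where "x \<in> C" "lam x = q" by blast
    thus "\<exists>x\<in>C. lam x = q \<and> c \<bullet> x = lam c \<bullet> lam x" using cen[OF c] by blast
  qed (use A1 A2 in auto)
  have P3: "ftvn_center C lam = C"
    unfolding ftvn_center_def ftvn_commute_def using cen by auto
  have lamCD: "lam c \<bullet> lam d = 0" if "c \<in> C" "d \<in> orthogonal_comp C" for c d
    using cen[OF that(1), of d] that orth by auto
  have P4: "ftvn (orthogonal_comp C) lam"
    unfolding ftvn_def
  proof (intro conjI ballI)
    show "subspace (orthogonal_comp C)" by (rule subspace_orthogonal_comp)
  next
    fix c q assume c: "c \<in> orthogonal_comp C" and q: "q \<in> lam ` orthogonal_comp C"
    then obtain z where z: "z \<in> orthogonal_comp C" "lam z = q" by blast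
    obtain x where x: "lam x = q" "c \<bullet> x = lam c \<bullet> lam x" using A3[of q c] z by blast
    obtain x1 x2 where xd: "x = x1 + x2" "x1 \<in> C" "x2 \<in> orthogonal_comp C" using dec by blast
    have lx: "lam x = lam x2 + lam x1" using central_add_lam[OF A, of x1 x2] xd unfolding C_def by (simp add: add.commute)
    have "lam x \<bullet> lam x1 = lam x2 \<bullet> lam x1 + lam x1 \<bullet> lam x1"
      using lx by (simp add: inner_add_left)
    moreover have "lam x2 \<bullet> lam x1 = 0" using lamCD[OF xd(2,3)] by (metis inner_commute)
    ultimately have "lam x \<bullet> lam x1 = lam x1 \<bullet> lam x1" by simp
    moreover have "lam x \<bullet> lam x1 = 0" using x(1) z lamCD[OF xd(2) z(1)] by (metis inner_commute)
    ultimately have "lam x1 = 0" by simp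
    hence "x1 = 0" using A1[of x1] by simp
    hence "x \<in> orthogonal_comp C" using xd by simp
    thus "\<exists>x\<in>orthogonal_comp C. lam x = q \<and> c \<bullet> x = lam c \<bullet> lam x" using x by blast
  qed (use A1 A2 in auto)
  have P5: "ftvn_center (orthogonal_comp C) lam = {0}"
  proof
    show "{0} \<subseteq> ftvn_center (orthogonal_comp C) lam"
      using lam0[OF A] subspace_orthogonal_comp[of C]
      by (auto simp: ftvn_center_def ftvn_commute_def subspace_0)
  next
    show "ftvn_center (orthogonal_comp C) lam \<subseteq> {0}"
    proof
      fix x assume "x \<in> ftvn_center (orthogonal_comp C) lam"
      hence x: "x \<in> orthogonal_comp C" "\<And>y. y \<in> orthogonal_comp C \<Longrightarrow> x \<bullet> y = lam x \<bullet> lam y"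
        by (auto simp: ftvn_center_def ftvn_commute_def)
      have "x \<bullet> y = lam x \<bullet> lam y" for y
      proof -
        obtain y1 y2 where yd: "y = y1 + y2" "y1 \<in> C" "y2 \<in> orthogonal_comp C" using dec by blast
        have ly: "lam y = lam y2 + lam y1" using central_add_lam[OF A, of y1 y2] yd unfolding C_def by (simp add: add.commute)
        have e1: "lam x \<bullet> lam y = lam x \<bullet> lam y2 + lam x \<bullet> lam y1" by (simp add: ly inner_add_right)
        have e2: "lam x \<bullet> lam y1 = 0" using lamCD[OF yd(2) x(1)] by (metis inner_commute)
        have e3: "lam x \<bullet> lam y2 = x \<bullet> y2" using x(2)[OF yd(3)] by simp
        have e4: "x \<bullet> y1 = 0" using x(1) yd(2) orth by (metis inner_commute)
        have e5: "x \<bullet> y = x \<bullet> y1 + x \<bullet> y2" using yd(1) by (simp add: inner_add_right)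
        show ?thesis using e1 e2 e3 e4 e5 by linarith
      qed
      hence "x \<in> C" unfolding C_def central_iff by blast
      hence "x \<bullet> x = 0" using x(1) orth by blast
      thus "x \<in> {0}" by simp
    qed
  qed
  show ?thesis using P1 P2 P3 P4 P5 unfolding C_def by (intro conjI)
qed

end
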